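(* Consider a game in which Constructor and Blocker alternately claim unclaimed edges of $K_n$, and suppose that at some moment, with Constructor to move, there are five vertices $v_1,\dots,v_5$ that are isolated in Constructor's graph and such that no edge between two of them has been claimed by Blocker. Assume Constructor is allowed to claim edges among $v_1,\dots,v_5$ forming a triangle with a pendant leg (i.e. this subgraph is not forbidden to her). Then, whatever Blocker does, Constructor can within her next four moves build a triangle with a pendant leg on vertices among $v_1,\dots,v_5$.
   Context: A triangle with a pendant leg is a triangle together with one additional edge joining one of its vertices to a fourth vertex. Constructor's graph is the graph of edges claimed by Constructor. *)

theory Defs
  imports Main
begin

definition Kn_edges :: "nat \<Rightarrow> nat set set" where
  "Kn_edges n = {e. e \<subseteq> {..<n} \<and> card e = 2}"

definition contains_copy :: "nat set set \<Rightarrow> 'b set set \<Rightarrow> bool" where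
  "contains_copy G H \<longleftrightarrow> (\<exists>f. inj_on f (\<Union>H) \<and> (\<forall>e\<in>H. f ` e \<in> G))"

definition F_free :: "'b set set \<Rightarrow> nat set set \<Rightarrow> bool" where
  "F_free F G \<longleftrightarrow> \<not> contains_copy G F"

definition paw_edges :: "nat \<Rightarrow> nat \<Rightarrow> nat \<Rightarrow> nat \<Rightarrow> nat set set" where
  "paw_edges a b c d = {{a,b},{b,c},{a,c},{c,d}}"

definition paw_on :: "nat set set \<Rightarrow> nat set \<Rightarrow> bool" where
  "paw_on C S \<longleftrightarrow> (\<exists>a\<in>S. \<exists>b\<in>S. \<exists>c\<in>S. \<exists>d\<in>S.
      distinct [a,b,c,d] \<and> paw_edges a b c d \<subseteq> C)"

text \<open>builds F n S k C B: Constructor (graph C, to move, forbidden graph F) can, against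
  every play of Blocker (graph B), obtain a triangle with a pendant leg on vertices of S
  within her next k moves. Constructor may only claim unclaimed edges keeping her graph
  F-free; Blocker claims any unclaimed edge (if none remains, the game is over).\<close>
fun builds :: "'b set set \<Rightarrow> nat \<Rightarrow> nat set \<Rightarrow> nat \<Rightarrow> nat set set \<Rightarrow> nat set set \<Rightarrow> bool" where
  "builds F n S 0 C B = paw_on C S"
| "builds F n S (Suc k) C B =
     (paw_on C S \<or>
      (\<exists>e. e \<in> Kn_edges n \<and> e \<notin> C \<and> e \<notin> B \<and> F_free F (insert e C) \<and>
        (paw_on (insert e C) S \<or>
         ((\<exists>e'. e' \<in> Kn_edges n - (insert e C \<union> B)) \<and>
          (\<forall>e'. e' \<in> Kn_edges n - (insert e C \<union> B) \<longrightarrow>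
                builds F n S k (insert e C) (insert e' B))))))"

end

theory Submission
  imports Defs
begin

definition tr :: "'a \<Rightarrow> 'a \<Rightarrow> 'a \<Rightarrow> 'a" where
  "tr z y u = (if u = z then y else if u = y then z else u)"

lemma inj_tr: "inj (tr z y)"
  unfolding inj_def tr_def by auto

lemma perm_exists:
  "distinct xs \<Longrightarrow> distinct ys \<Longrightarrow> length xs = length ys \<Longrightarrow> set xs \<subseteq> V \<Longrightarrow> set ys \<subseteq> V
   \<Longrightarrow> \<exists>g. inj g \<and> (\<forall>x. x \<notin> V \<longrightarrow> g x = x) \<and> map g xs = ys"
proof (induction xs arbitrary: ys)
  case Nil
  then show ?case by (intro exI[of _ id]) auto
next
  case (Cons x xs)
  then obtain y ys' where ys: "ys = y # ys'" by (cases ys) auto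
  with Cons obtain g where g: "inj g" "\<forall>x. x \<notin> V \<longrightarrow> g x = x" "map g xs = ys'" by auto
  define z where "z = g x"
  have zV: "z \<in> V"
  proof (rule ccontr)
    assume "z \<notin> V"
    then have "g z = z" using g by auto
    then have "z = x" using g(1) unfolding z_def by (auto dest: injD)
    then show False using \<open>z \<notin> V\<close> Cons.prems by auto
  qed
  have zn: "z \<notin> set ys'"
  proof
    assume "z \<in> set ys'"
    then obtain u where "u \<in> set xs" "g u = z" using g(3) by auto
    then have "u = x" using g(1) unfolding z_def by (auto dest: injD)
    then show False using Cons.prems \<open>u \<in> set xs\<close> by auto
  qed
  have yn: "y \<notin> set ys'" using Cons.prems ys by auto
  have "map (tr z y \<circ> g) xs = ys'"
  proof -
    have "\<forall>u\<in>set xs. tr z y (g u) = g u"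
    proof
      fix u assume "u \<in> set xs"
      then have "g u \<in> set ys'" using g(3) by force
      then show "tr z y (g u) = g u" using zn yn unfolding tr_def by auto
    qed
    then have "map (tr z y \<circ> g) xs = map g xs" by auto
    then show ?thesis using g(3) by simp
  qed
  moreover have "(tr z y \<circ> g) x = y" unfolding tr_def z_def by simp
  moreover have "inj (tr z y \<circ> g)" using inj_tr g(1) by (metis inj_compose)
  moreover have "\<forall>u. u \<notin> V \<longrightarrow> (tr z y \<circ> g) u = u"
    using g(2) zV ys Cons.prems unfolding tr_def by auto
  ultimately show ?case using ys by (intro exI[of _ "tr z y \<circ> g"]) (simp del: comp_apply)
qed

lemma copy_map:
  assumes "contains_copy G H" "inj g" "\<forall>e\<in>G. g ` e \<in> G'"
  shows "contains_copy G' H"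
proof -
  obtain f where f: "inj_on f (\<Union>H)" "\<forall>e\<in>H. f ` e \<in> G"
    using assms(1) unfolding contains_copy_def by auto
  have "inj_on (g \<circ> f) (\<Union>H)"
    using f(1) assms(2) by (meson comp_inj_on inj_on_subset subset_UNIV)
  moreover have "\<forall>e\<in>H. (g \<circ> f) ` e \<in> G'"
    using f(2) assms(3) by (metis image_comp)
  ultimately show ?thesis unfolding contains_copy_def by blast
qed

lemma F_free_mono: "F_free F G' \<Longrightarrow> G \<subseteq> G' \<Longrightarrow> F_free F G"
  unfolding F_free_def using copy_map[of G F id G'] by auto

lemma sym_paw:
  assumes C0: "\<forall>e\<in>C0. e \<inter> V = {}"
    and d: "distinct [a,b,c,d]" "{a,b,c,d} \<subseteq> V"
    and d0: "distinct [a0,b0,c0,d0]" "{a0,b0,c0,d0} \<subseteq> V"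
    and ff: "F_free F (C0 \<union> paw_edges a0 b0 c0 d0)"
  shows "F_free F (C0 \<union> paw_edges a b c d)"
proof -
  obtain g where g: "inj g" "\<forall>x. x \<notin> V \<longrightarrow> g x = x" "map g [a,b,c,d] = [a0,b0,c0,d0]"
    using perm_exists[of "[a,b,c,d]" "[a0,b0,c0,d0]" V] d d0 by auto
  have "\<forall>e\<in>C0 \<union> paw_edges a b c d. g ` e \<in> C0 \<union> paw_edges a0 b0 c0 d0"
  proof
    fix e assume e: "e \<in> C0 \<union> paw_edges a b c d"
    show "g ` e \<in> C0 \<union> paw_edges a0 b0 c0 d0"
    proof (cases "e \<in> C0")
      case True
      then have "g ` e = e" using C0 g(2) by force
      then show ?thesis using True by simp
    next
      case False
      then show ?thesis using e g(3) unfolding paw_edges_def by auto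
    qed
  qed
  then show ?thesis using ff g(1) copy_map unfolding F_free_def by blast
qed

lemma pigeon4:
  assumes "distinct [A1,A2,A3,A4::'a]"
  shows "\<exists>e\<in>{A1,A2,A3,A4}. e \<notin> {b1,b2,b3}"
proof (rule ccontr)
  assume "\<not> ?thesis"
  then have "{A1,A2,A3,A4} \<subseteq> {b1,b2,b3}" by auto
  then have "card {A1,A2,A3,A4} \<le> card {b1,b2,b3}" by (intro card_mono) auto
  also have "\<dots> \<le> 3" by (simp add: card_insert_le_m1)
  finally show False using assms by simp
qed


lemma step_rule:
  assumes "e \<in> Kn_edges n" "e \<notin> C" "e \<notin> B" "F_free F (insert e C)"
    "e0 \<in> Kn_edges n - (insert e C \<union> B)"
    "\<And>e'. e' \<in> Kn_edges n - (insert e C \<union> B) \<Longrightarrow> builds F n S k (insert e C) (insert e' B)"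
  shows "builds F n S (Suc k) C B"
  unfolding builds.simps using assms by blast

lemma fin_rule:
  assumes "e \<in> Kn_edges n" "e \<notin> C" "e \<notin> B" "F_free F (insert e C)"
    "paw_on (insert e C) S"
  shows "builds F n S (Suc k) C B"
  unfolding builds.simps using assms by blast

context
  fixes F :: "'b set set" and n :: nat and S :: "nat set" and C0 B0 :: "nat set set"
  assumes kn: "\<And>a b. a\<in>S \<Longrightarrow> b\<in>S \<Longrightarrow> a\<noteq>b \<Longrightarrow> {a,b} \<in> Kn_edges n"
  and nC: "\<And>a b. a\<in>S \<Longrightarrow> b\<in>S \<Longrightarrow> {a,b} \<notin> C0"
  and nB: "\<And>a b. a\<in>S \<Longrightarrow> b\<in>S \<Longrightarrow> {a,b} \<notin> B0"
  and ff: "\<And>a b c d. a\<in>S \<Longrightarrow> b\<in>S \<Longrightarrow> c\<in>S \<Longrightarrow> d\<in>S \<Longrightarrow> distinct [a,b,c,d]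
             \<Longrightarrow> F_free F (C0 \<union> paw_edges a b c d)"
begin

lemma ffs: "a\<in>S \<Longrightarrow> b\<in>S \<Longrightarrow> c\<in>S \<Longrightarrow> d\<in>S \<Longrightarrow> distinct [a,b,c,d]
   \<Longrightarrow> G \<subseteq> C0 \<union> paw_edges a b c d \<Longrightarrow> F_free F G"
  using ff F_free_mono by blast

lemma paw_onI: "a\<in>S \<Longrightarrow> b\<in>S \<Longrightarrow> c\<in>S \<Longrightarrow> d\<in>S \<Longrightarrow> distinct [a,b,c,d]
   \<Longrightarrow> paw_edges a b c d \<subseteq> G \<Longrightarrow> paw_on G S"
  unfolding paw_on_def by blast

lemma fin:
  assumes "a\<in>S" "b\<in>S" "c\<in>S" "d\<in>S" "distinct [a,b,c,d]"
    and "x\<in>S" "y\<in>S" "x \<noteq> y" "{x,y} \<notin> C" "{x,y} \<notin> B"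
    and "C \<subseteq> C0 \<union> paw_edges a b c d" "paw_edges a b c d \<subseteq> insert {x,y} C" "{x,y} \<in> paw_edges a b c d"
  shows "builds F n S (Suc k) C B"
proof (rule fin_rule[of "{x,y}"])
  show "{x,y} \<in> Kn_edges n" using kn assms by auto
  show "F_free F (insert {x, y} C)"
    apply (rule ffs[OF assms(1-5)])
    using assms(11,13) by blast
  show "paw_on (insert {x, y} C) S" using paw_onI[OF assms(1-5) assms(12)] .
qed (use assms in auto)


lemma triA:
  assumes S: "x\<in>S" "y\<in>S" "z\<in>S" "w1\<in>S" "w2\<in>S" and D: "distinct [x,y,z,w1,w2]"
    and b: "{x,z} \<noteq> b1" "{x,z} \<noteq> b2"
  shows "builds F n S (Suc (Suc 0)) (insert {y,z} (insert {x,y} C0)) (insert b2 (insert b1 B0))"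
proof -
  have dl: "distinct [{z,w1},{z,w2},{x,w1},{x,w2}]" using D by (auto simp: doubleton_eq_iff)
  have legs: "\<exists>e\<in>{{z,w1},{z,w2},{x,w1},{x,w2}}. e \<notin> {b1,b2,b3}" for b3
    using pigeon4[OF dl] by blast
  obtain e0 where e0: "e0\<in>{{z,w1},{z,w2},{x,w1},{x,w2}}" "e0 \<notin> {b1,b2,b2}" using legs by blast
  show ?thesis
  proof (rule step_rule[of "{x,z}" _ _ _ _ e0])
    show "{x,z} \<in> Kn_edges n" using kn S D by auto
    show "{x,z} \<notin> insert {y,z} (insert {x,y} C0)" using nC S D by (auto simp: doubleton_eq_iff)
    show "{x,z} \<notin> insert b2 (insert b1 B0)" using nB S b by auto
    show "F_free F (insert {x,z} (insert {y,z} (insert {x,y} C0)))"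
      by (rule ffs[of x y z w1]) (use S D in \<open>auto simp: paw_edges_def\<close>)
    show "e0 \<in> Kn_edges n - (insert {x,z} (insert {y,z} (insert {x,y} C0)) \<union> insert b2 (insert b1 B0))"
      using e0 kn nC nB S D by (auto simp: doubleton_eq_iff)
  next
    fix b3 assume "b3 \<in> Kn_edges n - (insert {x,z} (insert {y,z} (insert {x,y} C0)) \<union> insert b2 (insert b1 B0))"
    from legs[of b3] obtain e where e: "e\<in>{{z,w1},{z,w2},{x,w1},{x,w2}}" "e \<notin> {b1,b2,b3}" by blast
    show "builds F n S (Suc 0) (insert {x,z} (insert {y,z} (insert {x,y} C0))) (insert b3 (insert b2 (insert b1 B0)))"
    proof -
      consider "e = {z,w1}" | "e = {z,w2}" | "e = {x,w1}" | "e = {x,w2}" using e by blast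
      then show ?thesis
      proof cases
        case 1 show ?thesis
          by (rule fin[of x y z w1 z w1]) (use S D e 1 nC nB in \<open>auto simp: paw_edges_def doubleton_eq_iff\<close>)
      next
        case 2 show ?thesis
          by (rule fin[of x y z w2 z w2]) (use S D e 2 nC nB in \<open>auto simp: paw_edges_def doubleton_eq_iff\<close>)
      next
        case 3 show ?thesis
          by (rule fin[of y z x w1 x w1]) (use S D e 3 nC nB in \<open>auto simp: paw_edges_def doubleton_eq_iff\<close>)
      next
        case 4 show ?thesis
          by (rule fin[of y z x w2 x w2]) (use S D e 4 nC nB in \<open>auto simp: paw_edges_def doubleton_eq_iff\<close>)
      qed
    qed
  qed
qed

lemma twoT:
  assumes S: "x\<in>S" "y\<in>S" "z\<in>S" "w\<in>S" and D: "distinct [x,y,z,w]"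
    and b: "{x,w} \<noteq> b1" "{x,w} \<noteq> b2" "{z,w} \<noteq> b1" "{z,w} \<noteq> b2" "{y,w} \<noteq> b1" "{y,w} \<noteq> b2"
  shows "builds F n S (Suc (Suc 0)) (insert {y,z} (insert {x,y} C0)) (insert b2 (insert b1 B0))"
proof (rule step_rule[of "{y,w}" _ _ _ _ "{x,w}"])
  show "{y,w} \<in> Kn_edges n" using kn S D by auto
  show "{y,w} \<notin> insert {y,z} (insert {x,y} C0)" using nC S D by (auto simp: doubleton_eq_iff)
  show "{y,w} \<notin> insert b2 (insert b1 B0)" using nB S b by auto
  show "F_free F (insert {y,w} (insert {y,z} (insert {x,y} C0)))"
    by (rule ffs[of x w y z]) (use S D in \<open>auto simp: paw_edges_def\<close>)
  show "{x,w} \<in> Kn_edges n - (insert {y,w} (insert {y,z} (insert {x,y} C0)) \<union> insert b2 (insert b1 B0))"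
    using kn nC nB S D b by (auto simp: doubleton_eq_iff)
next
  fix b3 assume "b3 \<in> Kn_edges n - (insert {y,w} (insert {y,z} (insert {x,y} C0)) \<union> insert b2 (insert b1 B0))"
  show "builds F n S (Suc 0) (insert {y,w} (insert {y,z} (insert {x,y} C0))) (insert b3 (insert b2 (insert b1 B0)))"
  proof (cases "b3 = {x,w}")
    case False show ?thesis
      by (rule fin[of x w y z x w]) (use S D b False nC nB in \<open>auto simp: paw_edges_def doubleton_eq_iff\<close>)
  next
    case True show ?thesis
      by (rule fin[of z w y x z w]) (use S D b True nC nB in \<open>auto simp: paw_edges_def doubleton_eq_iff\<close>)
  qed
qed

lemma st2:
  assumes S: "x\<in>S" "y\<in>S" "z\<in>S" "w1\<in>S" "w2\<in>S" and D: "distinct [x,y,z,w1,w2]"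
    and b: "{x,z} \<noteq> b1" "{y,z} \<noteq> b1"
  shows "builds F n S (Suc (Suc (Suc 0))) (insert {x,y} C0) (insert b1 B0)"
proof (rule step_rule[of "{y,z}" _ _ _ _ "{x,z}"])
  show "{y,z} \<in> Kn_edges n" using kn S D by auto
  show "{y,z} \<notin> insert {x,y} C0" using nC S D by (auto simp: doubleton_eq_iff)
  show "{y,z} \<notin> insert b1 B0" using nB S b by auto
  show "F_free F (insert {y,z} (insert {x,y} C0))"
    by (rule ffs[of x y z w1]) (use S D in \<open>auto simp: paw_edges_def\<close>)
  show "{x,z} \<in> Kn_edges n - (insert {y,z} (insert {x,y} C0) \<union> insert b1 B0)"
    using kn nC nB S D b by (auto simp: doubleton_eq_iff)
next
  fix b2 assume "b2 \<in> Kn_edges n - (insert {y,z} (insert {x,y} C0) \<union> insert b1 B0)"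
  show "builds F n S (Suc (Suc 0)) (insert {y,z} (insert {x,y} C0)) (insert b2 (insert b1 B0))"
  proof (cases "b2 = {x,z}")
    case False then show ?thesis using triA[OF S D] b by auto
  next
    case True
    show ?thesis
    proof (cases "b1 \<in> {{x,w1},{z,w1},{y,w1}}")
      case False then show ?thesis
        using twoT[of x y z w1 b1 b2] S D True by (auto simp: doubleton_eq_iff)
    next
      case b1: True then show ?thesis
        using twoT[of x y z w2 b1 b2] S D True by (auto simp: doubleton_eq_iff)
    qed
  qed
qed

lemma st1:
  assumes S: "ua\<in>S" "ub\<in>S" "uc\<in>S" "ud\<in>S" "ue\<in>S" and D: "distinct [ua,ub,uc,ud,ue]"
  shows "builds F n S (Suc (Suc (Suc (Suc 0)))) C0 B0"
proof (rule step_rule[of "{ua,ub}" _ _ _ _ "{ua,uc}"])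
  show "{ua,ub} \<in> Kn_edges n" using kn S D by auto
  show "{ua,ub} \<notin> C0" using nC S by auto
  show "{ua,ub} \<notin> B0" using nB S by auto
  show "F_free F (insert {ua,ub} C0)"
    by (rule ffs[of ua ub uc ud]) (use S D in \<open>auto simp: paw_edges_def\<close>)
  show "{ua,uc} \<in> Kn_edges n - (insert {ua,ub} C0 \<union> B0)"
    using kn nC nB S D by (auto simp: doubleton_eq_iff)
next
  fix b1 assume "b1 \<in> Kn_edges n - (insert {ua,ub} C0 \<union> B0)"
  show "builds F n S (Suc (Suc (Suc 0))) (insert {ua,ub} C0) (insert b1 B0)"
  proof (cases "b1 \<in> {{ua,uc},{ub,uc}}")
    case False then show ?thesis using st2[of ua ub uc ud ue b1] S D by auto
  next
    case True then show ?thesis using st2[of ua ub ud uc ue b1] S D by (auto simp: doubleton_eq_iff)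
  qed
qed
end


theorem lemma2p3:
  fixes F :: "'b set set" and n :: nat and C B :: "nat set set" and v :: "nat \<Rightarrow> nat"
  assumes "C \<subseteq> Kn_edges n" and "B \<subseteq> Kn_edges n" and "C \<inter> B = {}"
    and "F_free F C"
    and "\<forall>i\<in>{1..5}. v i < n"
    and "inj_on v {1..5}"
    and "\<forall>i\<in>{1..5}. \<forall>e\<in>C. v i \<notin> e"
    and "\<forall>i\<in>{1..5}. \<forall>j\<in>{1..5}. {v i, v j} \<notin> B"
    and "\<exists>a\<in>v ` {1..5}. \<exists>b\<in>v ` {1..5}. \<exists>c\<in>v ` {1..5}. \<exists>d\<in>v ` {1..5}.
           distinct [a,b,c,d] \<and> F_free F (C \<union> paw_edges a b c d)"
  shows "builds F n (v ` {1..5}) 4 C B"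
proof -
  let ?S = "v ` {1..5}"
  have S5: "{1..5::nat} = {1,2,3,4,5}" by auto
  have D: "distinct [v 1, v 2, v 3, v 4, v 5]"
    using assms(6) unfolding S5 by (auto simp: inj_on_def)
  have kn: "{a,b} \<in> Kn_edges n" if "a\<in>?S" "b\<in>?S" "a\<noteq>b" for a b
    using that assms(5) unfolding Kn_edges_def by auto
  have nC: "{a,b} \<notin> C" if "a\<in>?S" "b\<in>?S" for a b
    using that assms(7) by blast
  have nB: "{a,b} \<notin> B" if "a\<in>?S" "b\<in>?S" for a b
    using that assms(8) by blast
  have C0: "\<forall>e\<in>C. e \<inter> ?S = {}" using assms(7) by blast
  obtain a0 b0 c0 d0 where p0: "a0\<in>?S" "b0\<in>?S" "c0\<in>?S" "d0\<in>?S" "distinct [a0,b0,c0,d0]"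
    "F_free F (C \<union> paw_edges a0 b0 c0 d0)" using assms(9) by blast
  have ff: "F_free F (C \<union> paw_edges a b c d)"
    if "a\<in>?S" "b\<in>?S" "c\<in>?S" "d\<in>?S" "distinct [a,b,c,d]" for a b c d
    by (rule sym_paw[OF C0 that(5) _ p0(5) _ p0(6)]) (use that p0 in auto)
  have "builds F n ?S (Suc (Suc (Suc (Suc 0)))) C B"
    by (rule st1[where ua="v 1" and ub="v 2" and uc="v 3" and ud="v 4" and ue="v 5", OF kn nC nB ff]) (use D in auto)
  then show ?thesis by (simp add: numeral_eq_Suc)
qed

end
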